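(* Let $q\geq0$ be an integer. Suppose $S_N$ admits the weak global Edgeworth expansion of order $r$ for $f\in F^{q+1}_r$. If each polynomial $P_{p,g}$ in the weak global expansion has the same parity as $p$, then $S_N$ admits the weak local Edgeworth expansion of order $r-1$ for $f$.
   Context: $X_1,X_2,\dots$ are real random variables, $S_N=\sum_{n=1}^NX_n$, $A\in\mathbb{R}$, $\sigma^2>0$, $\mathfrak{n}(y)=\frac{1}{\sqrt{2\pi\sigma^2}}e^{-y^2/(2\sigma^2)}$. "$\|f\|\,o(N^{-a})$" denotes a quantity bounded by $\|f\|\,\varepsilon_N N^{-a}$ with $\varepsilon_N\to0$ independent of $f$; the norm on $F^m_k$ is $C^m_k$. Weak global expansion of order $r$ for $f\in F^{q+1}_r$: polynomials $P_{0,g},\dots,P_{r,g}$ independent of $f$ with $\mathbb{E}(f(S_N-NA))=\sum_{p=0}^rN^{-p/2}\int P_{p,g}(z)\mathfrak{n}(z)f(z\sqrt N)\,dz+\|f\|\,o(N^{-(r+1)/2})$. Weak local expansion of order $r-1$: polynomials $P_{0,l},\dots,P_{\lfloor (r-1)/2\rfloor,l}$ independent of $f$ with $\sqrt N\,\mathbb{E}(f(S_N-NA))=\frac1{2\pi}\sum_{p=0}^{\lfloor (r-1)/2\rfloor}N^{-p}\int P_{p,l}(z)f(z)\,dz+\|f\|\,o(N^{-(r-1)/2})$. $F^m_k$: $m$ times continuously differentiable $f$ with $C^m_k(f)=\max_{0\le j\le m}\|f^{(j)}\|_{L^1}+\max_{0\le j\le k}\|x^jf\|_{L^1}<\infty$.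 *)

theory Defs
  imports "HOL-Probability.Probability" "HOL-Computational_Algebra.Polynomial"
begin

definition gauss_dens :: "real \<Rightarrow> real \<Rightarrow> real" where
  "gauss_dens s2 y = 1 / sqrt (2 * pi * s2) * exp (- (y ^ 2) / (2 * s2))"

definition Cm_diff :: "nat \<Rightarrow> (real \<Rightarrow> real) \<Rightarrow> bool" where
  "Cm_diff m f \<longleftrightarrow> (\<forall>j<m. \<forall>x. ((deriv ^^ j) f) differentiable (at x))
                     \<and> continuous_on UNIV ((deriv ^^ m) f)"

definition F_class :: "nat \<Rightarrow> nat \<Rightarrow> (real \<Rightarrow> real) \<Rightarrow> bool" where
  "F_class m k f \<longleftrightarrow> Cm_diff m f
     \<and> (\<forall>j\<le>m. integrable lborel ((deriv ^^ j) f))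
     \<and> (\<forall>j\<le>k. integrable lborel (\<lambda>x. x ^ j * f x))"

definition C_norm :: "nat \<Rightarrow> nat \<Rightarrow> (real \<Rightarrow> real) \<Rightarrow> real" where
  "C_norm m k f =
     Max ((\<lambda>j. \<integral>x. \<bar>(deriv ^^ j) f x\<bar> \<partial>lborel) ` {0..m})
   + Max ((\<lambda>j. \<integral>x. \<bar>x ^ j * f x\<bar> \<partial>lborel) ` {0..k})"

definition S_sum :: "(nat \<Rightarrow> 'a \<Rightarrow> real) \<Rightarrow> nat \<Rightarrow> 'a \<Rightarrow> real" where
  "S_sum X N \<omega> = (\<Sum>n=1..N. X n \<omega>)"

definition weak_global_expansion ::
  "'a measure \<Rightarrow> (nat \<Rightarrow> 'a \<Rightarrow> real) \<Rightarrow> real \<Rightarrow> real \<Rightarrow> nat \<Rightarrow> nat \<Rightarrow> (nat \<Rightarrow> real poly) \<Rightarrow> bool" where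
  "weak_global_expansion M X A s2 q r P \<longleftrightarrow>
    (\<exists>\<epsilon>::nat \<Rightarrow> real. \<epsilon> \<longlonglongrightarrow> 0 \<and>
      (\<forall>N\<ge>1. \<forall>f. F_class (Suc q) r f \<longrightarrow>
         \<bar>(\<integral>\<omega>. f (S_sum X N \<omega> - real N * A) \<partial>M)
          - (\<Sum>p\<le>r. real N powr (- real p / 2) *
               (\<integral>z. poly (P p) z * gauss_dens s2 z * f (z * sqrt (real N)) \<partial>lborel))\<bar>
         \<le> C_norm (Suc q) r f * \<epsilon> N * real N powr (- (real r + 1) / 2)))"

text \<open>Weak local Edgeworth expansion of order r-1 for f in F^{q+1}_r, with polynomials
  P 0 .. P (floor((r-1)/2)); the index set {p. p < (r+1) div 2} is exactly
  {0..floor((r-1)/2)} (empty when r = 0).\<close>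
definition weak_local_expansion ::
  "'a measure \<Rightarrow> (nat \<Rightarrow> 'a \<Rightarrow> real) \<Rightarrow> real \<Rightarrow> nat \<Rightarrow> nat \<Rightarrow> (nat \<Rightarrow> real poly) \<Rightarrow> bool" where
  "weak_local_expansion M X A q r P \<longleftrightarrow>
    (\<exists>\<epsilon>::nat \<Rightarrow> real. \<epsilon> \<longlonglongrightarrow> 0 \<and>
      (\<forall>N\<ge>1. \<forall>f. F_class (Suc q) r f \<longrightarrow>
         \<bar>sqrt (real N) * (\<integral>\<omega>. f (S_sum X N \<omega> - real N * A) \<partial>M)
          - 1 / (2 * pi) * (\<Sum>p<(r + 1) div 2. real N powr (- real p) *
               (\<integral>z. poly (P p) z * f z \<partial>lborel))\<bar>
         \<le> C_norm (Suc q) r f * \<epsilon> N * real N powr (- (real r - 1) / 2)))"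

end

theory Submission
  imports Defs
begin


lemma exp_ge_pow_fact:
  fixes x :: real assumes "0 \<le> x" shows "x ^ n / fact n \<le> exp x"
proof -
  obtain t where t: "exp x = (\<Sum>m<Suc n. (x ^ m) / fact m) + (exp t / fact (Suc n)) * x ^ Suc n"
    using Maclaurin_exp_le[of x "Suc n"] by blast
  have "x ^ n / fact n \<le> (\<Sum>m<Suc n. (x ^ m) / fact m)"
    by (rule member_le_sum) (use assms in auto)
  moreover have "0 \<le> (exp t / fact (Suc n)) * x ^ Suc n" using assms by simp
  ultimately show ?thesis using t by linarith
qed

lemma pow_gauss_bound:
  fixes t b :: real assumes b: "b > 0"
  shows "\<bar>t\<bar> ^ i * exp (- (t ^ 2) / b) \<le> 1 + fact i * b ^ i"
proof (cases "\<bar>t\<bar> \<le> 1")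
  case True
  have "\<bar>t\<bar> ^ i \<le> 1" using True by (simp add: power_le_one)
  moreover have "exp (- (t ^ 2) / b) \<le> 1" using b by simp
  ultimately have "\<bar>t\<bar> ^ i * exp (- (t ^ 2) / b) \<le> 1"
    by (simp add: mult_le_one)
  then show ?thesis by (smt (verit) fact_ge_zero b zero_le_power mult_nonneg_nonneg)
next
  case False
  have "\<bar>t\<bar> ^ i \<le> \<bar>t\<bar> ^ (2*i)" using False by (intro power_increasing) auto
  also have "\<dots> = (t^2) ^ i" by (simp add: power_mult power2_abs)
  also have "\<dots> = fact i * b ^ i * ((t^2/b) ^ i / fact i)" using b
    by (simp add: power_divide)
  also have "\<dots> \<le> fact i * b ^ i * exp (t^2/b)" using b
    by (intro mult_left_mono exp_ge_pow_fact) auto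
  finally have "\<bar>t\<bar> ^ i * exp (- (t ^ 2) / b) \<le> fact i * b ^ i * exp (t^2/b) * exp (- (t ^ 2) / b)"
    by (simp add: mult_right_mono)
  also have "\<dots> = fact i * b ^ i" by (simp add: mult.assoc flip: exp_add)
  finally show ?thesis by simp
qed

lemma poly_gauss_bound:
  fixes b :: real assumes b: "b > 0"
  shows "\<exists>B. \<forall>t. \<bar>poly Q t * exp (- (t ^ 2) / b)\<bar> \<le> B"
proof (intro exI allI)
  fix t
  have "\<bar>poly Q t * exp (- (t ^ 2) / b)\<bar> = \<bar>\<Sum>i\<le>degree Q. coeff Q i * t ^ i * exp (- (t ^ 2) / b)\<bar>"
    by (simp add: poly_altdef sum_distrib_right)
  also have "\<dots> \<le> (\<Sum>i\<le>degree Q. \<bar>coeff Q i * t ^ i * exp (- (t ^ 2) / b)\<bar>)"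
    by (rule sum_abs)
  also have "\<dots> \<le> (\<Sum>i\<le>degree Q. \<bar>coeff Q i\<bar> * (1 + fact i * b ^ i))"
  proof (rule sum_mono)
    fix i
    have "\<bar>coeff Q i * t ^ i * exp (- (t ^ 2) / b)\<bar> = \<bar>coeff Q i\<bar> * (\<bar>t\<bar> ^ i * exp (- (t ^ 2) / b))"
      by (simp add: abs_mult power_abs)
    also have "\<dots> \<le> \<bar>coeff Q i\<bar> * (1 + fact i * b ^ i)"
      by (intro mult_left_mono pow_gauss_bound b) auto
    finally show "\<bar>coeff Q i * t ^ i * exp (- (t ^ 2) / b)\<bar> \<le> \<bar>coeff Q i\<bar> * (1 + fact i * b ^ i)" .
  qed
  finally show "\<bar>poly Q t * exp (- (t ^ 2) / b)\<bar> \<le> (\<Sum>i\<le>degree Q. \<bar>coeff Q i\<bar> * (1 + fact i * b ^ i))" .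
qed

primrec gQ :: "real \<Rightarrow> real poly \<Rightarrow> nat \<Rightarrow> real poly" where
  "gQ b P 0 = P"
| "gQ b P (Suc m) = pderiv (gQ b P m) - smult (2/b) (pCons 0 (gQ b P m))"

lemma gQ_deriv: assumes "b \<noteq> 0" shows
  "((\<lambda>t. k * poly (gQ b P m) t * exp (- (t ^ 2) / b)) has_real_derivative
     k * poly (gQ b P (Suc m)) x * exp (- (x ^ 2) / b)) (at x)"
proof -
  have "((\<lambda>t. k * poly (gQ b P m) t * exp (- (t ^ 2) / b)) has_real_derivative
     k * poly (pderiv (gQ b P m)) x * exp (- (x ^ 2) / b) + k * poly (gQ b P m) x * (exp (- (x ^ 2) / b) * (- (2 * x ^ 1 * 1) / b))) (at x)"
    using assms by (intro derivative_eq_intros) auto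
  then show ?thesis using assms by (simp add: algebra_simps)
qed

lemma gauss_taylor:
  fixes b k :: real
  assumes b: "b > 0" and par: "\<And>t. poly P (-t) = (-1)^p * poly P t"
  shows "\<exists>a C. C \<ge> 0 \<and> (\<forall>j. odd (p+j) \<longrightarrow> a j = 0) \<and>
     (\<forall>t. \<bar>k * poly P t * exp (- (t ^ 2) / b) - (\<Sum>j<D. a j * t ^ j)\<bar> \<le> C * \<bar>t\<bar> ^ D)"
proof -
  define d where "d m t = k * poly (gQ b P m) t * exp (- (t ^ 2) / b)" for m t
  have dd: "\<And>m x. DERIV (d m) x :> d (Suc m) x"
    unfolding d_def using gQ_deriv[of b] b by (simp add: fun_eq_iff)
  have dpar: "d m (-t) = (-1)^(p+m) * d m t" for m t
  proof (induction m arbitrary: t)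
    case 0 then show ?case using par by (simp add: d_def)
  next
    case (Suc m)
    have e: "(\<lambda>t. d m (-t)) = (\<lambda>t. (-1)^(p+m) * d m t)" using Suc by auto
    have D1: "DERIV (\<lambda>t. d m (-t)) t :> d (Suc m) (-t) * (-1)"
      by (rule DERIV_chain2[OF dd]) (auto intro!: derivative_eq_intros)
    have D2: "DERIV (\<lambda>t. (-1)^(p+m) * d m t) t :> (-1)^(p+m) * d (Suc m) t"
      by (auto intro!: derivative_eq_intros dd)
    have "d (Suc m) (-t) * (-1) = (-1)^(p+m) * d (Suc m) t"
      using DERIV_unique[OF D1 D2[folded e]] .
    then show ?case by simp
  qed
  have d0: "odd (p+j) \<Longrightarrow> d j 0 = 0" for j
    using dpar[of j 0] by simp
  obtain B where B: "\<And>t. \<bar>poly (gQ b P D) t * exp (- (t ^ 2) / b)\<bar> \<le> B"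
    using poly_gauss_bound[OF b] by blast
  have B0: "B \<ge> 0" using B[of 0] by linarith
  define a where "a j = d j 0 / fact j" for j
  show ?thesis
  proof (intro exI conjI allI impI)
    show "0 \<le> \<bar>k\<bar> * B / fact D" using B0 by simp
    show "a j = 0" if "odd (p+j)" for j using d0[OF that] by (simp add: a_def)
    fix t
    obtain s where s: "d 0 t = (\<Sum>m<D. (d m 0 / fact m) * t ^ m) + (d D s / fact D) * t ^ D"
      using Maclaurin_all_le[where diff=d and f="d 0" and n=D and x=t] dd by blast
    have "\<bar>k * poly P t * exp (- (t ^ 2) / b) - (\<Sum>j<D. a j * t ^ j)\<bar> = \<bar>d D s / fact D * t ^ D\<bar>"
      using s by (simp add: d_def a_def)
    also have "\<dots> = \<bar>k\<bar> * \<bar>poly (gQ b P D) s * exp (- (s ^ 2) / b)\<bar> / fact D * \<bar>t\<bar> ^ D"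
      by (simp add: d_def abs_mult power_abs)
    also have "\<dots> \<le> \<bar>k\<bar> * B / fact D * \<bar>t\<bar> ^ D"
      by (intro mult_right_mono divide_right_mono mult_left_mono B) auto
    finally show "\<bar>k * poly P t * exp (- (t ^ 2) / b) - (\<Sum>j<D. a j * t ^ j)\<bar> \<le> \<bar>k\<bar> * B / fact D * \<bar>t\<bar> ^ D" .
  qed
qed

lemma powr_half_pow:
  fixes n :: real assumes "n > 0" shows "n powr (- real j / 2) = 1 / sqrt n ^ j"
proof -
  have "sqrt n ^ j = (n powr (1/2)) ^ j" using assms by (simp add: powr_half_sqrt)
  also have "\<dots> = n powr (real j * (1/2))" using assms by (intro powr_power) auto
  finally have "sqrt n ^ j = n powr (real j / 2)" by simp
  then show ?thesis by (simp add: powr_minus_divide)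
qed

lemma moment_le_Cnorm:
  assumes "j \<le> k" shows "(\<integral>x. \<bar>x ^ j * f x\<bar> \<partial>lborel) \<le> C_norm m k f"
proof -
  have "(\<integral>x. \<bar>x ^ j * f x\<bar> \<partial>lborel) \<le> Max ((\<lambda>j. \<integral>x. \<bar>x ^ j * f x\<bar> \<partial>lborel) ` {0..k})"
    using assms by (intro Max_ge) auto
  moreover have "0 \<le> Max ((\<lambda>j. \<integral>x. \<bar>(deriv ^^ j) f x\<bar> \<partial>lborel) ` {0..m})"
  proof -
    have "0 \<le> (\<integral>x. \<bar>(deriv ^^ 0) f x\<bar> \<partial>lborel)" by simp
    also have "\<dots> \<le> Max ((\<lambda>j. \<integral>x. \<bar>(deriv ^^ j) f x\<bar> \<partial>lborel) ` {0..m})"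
      by (intro Max_ge) (auto intro!: image_eqI[where x=0])
    finally show ?thesis .
  qed
  ultimately show ?thesis unfolding C_norm_def by linarith
qed

lemma change_var:
  fixes c :: real assumes "c > 0"
  shows "c * (\<integral>z. h z * f (z * c) \<partial>lborel) = (\<integral>y. h (y / c) * f y \<partial>lborel)"
proof -
  have "(\<integral>y. h (y / c) * f y \<partial>lborel) = \<bar>c\<bar> *\<^sub>R (\<integral>x. h ((0 + c * x) / c) * f (0 + c * x) \<partial>lborel)"
    using assms by (intro lborel_integral_real_affine) auto
  also have "\<dots> = c * (\<integral>z. h z * f (z * c) \<partial>lborel)"
    using assms by (simp add: mult.commute)
  finally show ?thesis by simp
qed


lemma fact1:
  fixes c C :: real and h :: "real \<Rightarrow> real"
  assumes c: "c > 0" and F: "F_class m r f" and Dr: "D \<le> r"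
    and hm: "h \<in> borel_measurable borel"
    and hb: "\<And>t. \<bar>h t - (\<Sum>j<D. a j * t ^ j)\<bar> \<le> C * \<bar>t\<bar> ^ D" and C0: "C \<ge> 0"
  shows "\<bar>c * (\<integral>z. h z * f (z * c) \<partial>lborel) - (\<Sum>j<D. a j / c ^ j * (\<integral>y. y ^ j * f y \<partial>lborel))\<bar>
     \<le> C / c ^ D * C_norm m r f"
proof -
  have mom: "\<And>j. j \<le> r \<Longrightarrow> integrable lborel (\<lambda>x. x ^ j * f x)"
    using F unfolding F_class_def by auto
  have fint: "integrable lborel f" using F unfolding F_class_def by (metis funpow_0 le0)
  have fm[measurable]: "f \<in> borel_measurable borel" using borel_measurable_integrable[OF fint] by simp
  note hm[measurable]
  define S where "S y = (\<Sum>j<D. a j / c ^ j * (y ^ j * f y))" for y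
  define R where "R y = (h (y / c) - (\<Sum>j<D. a j * (y / c) ^ j)) * f y" for y
  have SR: "h (y / c) * f y = S y + R y" for y
    by (simp add: S_def R_def algebra_simps sum_distrib_left power_divide)
  have Sint: "integrable lborel S" unfolding S_def
    using mom Dr by (auto intro!: Bochner_Integration.integrable_sum Bochner_Integration.integrable_mult_right)
  have Sval: "(\<integral>y. S y \<partial>lborel) = (\<Sum>j<D. a j / c ^ j * (\<integral>y. y ^ j * f y \<partial>lborel))"
    unfolding S_def using mom Dr by (subst Bochner_Integration.integral_sum) (auto intro!: Bochner_Integration.integrable_mult_right)
  have Rb: "\<bar>R y\<bar> \<le> C / c ^ D * \<bar>y ^ D * f y\<bar>" for y
  proof -
    have "\<bar>R y\<bar> = \<bar>h (y / c) - (\<Sum>j<D. a j * (y / c) ^ j)\<bar> * \<bar>f y\<bar>" by (simp add: R_def abs_mult)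
    also have "\<dots> \<le> C * \<bar>y / c\<bar> ^ D * \<bar>f y\<bar>" by (intro mult_right_mono hb) auto
    also have "\<dots> = C / c ^ D * \<bar>y ^ D * f y\<bar>" using c by (simp add: abs_mult power_abs power_divide)
    finally show ?thesis .
  qed
  have Mint: "integrable lborel (\<lambda>y. C / c ^ D * \<bar>y ^ D * f y\<bar>)"
    using mom Dr by (intro integrable_mult_right integrable_abs) auto
  have Rm: "R \<in> borel_measurable lborel" unfolding R_def by measurable
  have Rint: "integrable lborel R"
  proof (rule Bochner_Integration.integrable_bound[OF Mint Rm])
    show "AE x in lborel. norm (R x) \<le> norm (C / c ^ D * \<bar>x ^ D * f x\<bar>)"
      using Rb C0 c by (intro AE_I2) (simp add: abs_mult)
  qed
  have "c * (\<integral>z. h z * f (z * c) \<partial>lborel) = (\<integral>y. S y + R y \<partial>lborel)"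
    using change_var[OF c] SR by simp
  also have "\<dots> = (\<integral>y. S y \<partial>lborel) + (\<integral>y. R y \<partial>lborel)" using Sint Rint by simp
  finally have eq: "c * (\<integral>z. h z * f (z * c) \<partial>lborel) - (\<Sum>j<D. a j / c ^ j * (\<integral>y. y ^ j * f y \<partial>lborel)) = (\<integral>y. R y \<partial>lborel)"
    using Sval by simp
  have "\<bar>\<integral>y. R y \<partial>lborel\<bar> \<le> (\<integral>y. \<bar>R y\<bar> \<partial>lborel)" by (rule integral_abs_bound)
  also have "\<dots> \<le> (\<integral>y. C / c ^ D * \<bar>y ^ D * f y\<bar> \<partial>lborel)"
    by (intro integral_mono Rb Mint integrable_abs Rint)
  also have "\<dots> = C / c ^ D * (\<integral>y. \<bar>y ^ D * f y\<bar> \<partial>lborel)" by simp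
  also have "\<dots> \<le> C / c ^ D * C_norm m r f"
    using c C0 Dr by (intro mult_left_mono moment_le_Cnorm) auto
  finally show ?thesis using eq by simp
qed



lemma reindex_sum:
  fixes c :: real and a :: "nat \<Rightarrow> nat \<Rightarrow> real" and M :: "nat \<Rightarrow> real"
  assumes odd0: "\<And>p j. odd (p+j) \<Longrightarrow> a p j = 0"
  shows "(\<Sum>p\<le>r. 1 / c ^ p * (\<Sum>j<r-p. a p j / c ^ j * M j))
       = (\<Sum>m<(r+1) div 2. 1 / c ^ (2*m) * (\<Sum>p\<le>2*m. a p (2*m-p) * M (2*m-p)))"
proof -
  define F where "F = (\<lambda>(p,j). a p j * M j / c ^ (p+j))"
  define S where "S = Sigma {..r} (\<lambda>p. {..<r-p})"
  define S' where "S' = {x\<in>S. even (fst x + snd x)}"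
  define T where "T = Sigma {..<(r+1) div 2} (\<lambda>m. {..2*m})"
  define \<phi> where "\<phi> = (\<lambda>(m::nat,p::nat). (p, 2*m-p))"
  have "(\<Sum>p\<le>r. 1 / c ^ p * (\<Sum>j<r-p. a p j / c ^ j * M j)) = (\<Sum>p\<le>r. \<Sum>j<r-p. F (p,j))"
    by (intro sum.cong refl) (simp add: F_def sum_distrib_left power_add field_simps)
  also have "\<dots> = sum F S" unfolding S_def by (subst sum.Sigma) auto
  also have "\<dots> = sum F S'"
    using odd0 by (intro sum.mono_neutral_right) (auto simp: S_def S'_def F_def, metis even_add, metis even_add)
  also have "\<dots> = sum (\<lambda>x. F (\<phi> x)) T"
  proof (rule sum.reindex_bij_betw[symmetric])
    show "bij_betw \<phi> T S'"
    proof (rule bij_betw_byWitness[where f'="\<lambda>(p,j). ((p+j) div 2, p)"])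
      show "\<forall>x\<in>T. (\<lambda>(p,j). ((p+j) div 2, p)) (\<phi> x) = x"
        by (auto simp: T_def \<phi>_def)
      show "\<forall>y\<in>S'. \<phi> ((\<lambda>(p,j). ((p+j) div 2, p)) y) = y"
        by (auto simp: S'_def \<phi>_def elim!: evenE)
      show "\<phi> ` T \<subseteq> S'"
        by (auto simp: T_def S_def S'_def \<phi>_def)
      show "(\<lambda>(p,j). ((p+j) div 2, p)) ` S' \<subseteq> T"
        by (auto simp: T_def S_def S'_def elim!: evenE)
    qed
  qed
  also have "\<dots> = (\<Sum>m<(r+1) div 2. \<Sum>p\<le>2*m. F (\<phi> (m,p)))"
    unfolding T_def by (subst sum.Sigma) auto
  also have "\<dots> = (\<Sum>m<(r+1) div 2. 1 / c ^ (2*m) * (\<Sum>p\<le>2*m. a p (2*m-p) * M (2*m-p)))"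
    by (intro sum.cong refl) (simp add: F_def \<phi>_def sum_distrib_left)
  finally show ?thesis .
qed



lemma int_poly_Pl:
  fixes b :: "nat \<Rightarrow> real"
  assumes F: "F_class m r f" and "2*k \<le> r"
  shows "(\<integral>z. poly (smult (2*pi) (\<Sum>p\<le>2*k. monom (b p) (2*k-p))) z * f z \<partial>lborel)
       = 2*pi * (\<Sum>p\<le>2*k. b p * (\<integral>y. y ^ (2*k-p) * f y \<partial>lborel))"
proof -
  have mom: "\<And>j. j \<le> r \<Longrightarrow> integrable lborel (\<lambda>x. x ^ j * f x)"
    using F unfolding F_class_def by auto
  have "(\<integral>z. poly (smult (2*pi) (\<Sum>p\<le>2*k. monom (b p) (2*k-p))) z * f z \<partial>lborel)
      = (\<integral>z. 2*pi * (\<Sum>p\<le>2*k. b p * (z ^ (2*k-p) * f z)) \<partial>lborel)"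
    by (intro Bochner_Integration.integral_cong refl) (simp add: poly_sum poly_monom sum_distrib_left sum_distrib_right mult_ac)
  also have "\<dots> = 2*pi * (\<Sum>p\<le>2*k. b p * (\<integral>y. y ^ (2*k-p) * f y \<partial>lborel))"
    using mom assms(2)
    by (subst Bochner_Integration.integral_mult_right_zero, subst Bochner_Integration.integral_sum)
       (auto intro!: Bochner_Integration.integrable_mult_right)
  finally show ?thesis .
qed

theorem propositionA2:
  fixes M :: "'a measure" and X :: "nat \<Rightarrow> 'a \<Rightarrow> real"
    and A s2 :: real and q r :: nat and Pg :: "nat \<Rightarrow> real poly"
  assumes "prob_space M"
    and "\<And>n. X n \<in> borel_measurable M"
    and "s2 > 0"
    and "weak_global_expansion M X A s2 q r Pg"
    and "\<And>p z. p \<le> r \<Longrightarrow> poly (Pg p) (- z) = (-1) ^ p * poly (Pg p) z"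
  shows "\<exists>Pl :: nat \<Rightarrow> real poly. weak_local_expansion M X A q r Pl"
proof -
  note s2 = assms(3) and par = assms(5)
  obtain \<epsilon> :: "nat \<Rightarrow> real" where eps: "\<epsilon> \<longlonglongrightarrow> 0"
    and glob: "\<And>N f. N \<ge> 1 \<Longrightarrow> F_class (Suc q) r f \<Longrightarrow>
         \<bar>(\<integral>\<omega>. f (S_sum X N \<omega> - real N * A) \<partial>M)
          - (\<Sum>p\<le>r. real N powr (- real p / 2) *
               (\<integral>z. poly (Pg p) z * gauss_dens s2 z * f (z * sqrt (real N)) \<partial>lborel))\<bar>
         \<le> C_norm (Suc q) r f * \<epsilon> N * real N powr (- (real r + 1) / 2)"
    using assms(4) unfolding weak_global_expansion_def by blast
  define k where "k = 1 / sqrt (2 * pi * s2)"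
  define h where "h p z = poly (Pg p) z * gauss_dens s2 z" for p z
  have h_eq: "h p t = k * poly (Pg p) t * exp (- (t ^ 2) / (2 * s2))" for p t
    by (simp add: h_def gauss_dens_def k_def)
  have "\<forall>p. \<exists>aC :: (nat \<Rightarrow> real) \<times> real. p \<le> r \<longrightarrow> (snd aC \<ge> 0 \<and> (\<forall>j. odd (p+j) \<longrightarrow> fst aC j = 0) \<and>
     (\<forall>t. \<bar>h p t - (\<Sum>j<r-p. fst aC j * t ^ j)\<bar> \<le> snd aC * \<bar>t\<bar> ^ (r-p)))"
  proof (intro allI impI)
    fix p :: nat
    show "\<exists>aC :: (nat \<Rightarrow> real) \<times> real. p \<le> r \<longrightarrow> (snd aC \<ge> 0 \<and> (\<forall>j. odd (p+j) \<longrightarrow> fst aC j = 0) \<and>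
     (\<forall>t. \<bar>h p t - (\<Sum>j<r-p. fst aC j * t ^ j)\<bar> \<le> snd aC * \<bar>t\<bar> ^ (r-p)))"
    proof (cases "p \<le> r")
      case True
      obtain a C where "C \<ge> 0" "\<forall>j. odd (p+j) \<longrightarrow> a j = 0"
        "\<forall>t. \<bar>k * poly (Pg p) t * exp (- (t ^ 2) / (2 * s2)) - (\<Sum>j<r-p. a j * t ^ j)\<bar> \<le> C * \<bar>t\<bar> ^ (r-p)"
        using gauss_taylor[of "2 * s2" "Pg p" p k "r-p"] s2 par[OF True] by auto
      then show ?thesis by (intro exI[of _ "(a, C)"]) (simp add: h_eq)
    qed simp
  qed
  then obtain aC :: "nat \<Rightarrow> (nat \<Rightarrow> real) \<times> real" where aC: "\<And>p. p \<le> r \<Longrightarrow> (snd (aC p) \<ge> 0 \<and> (\<forall>j. odd (p+j) \<longrightarrow> fst (aC p) j = 0) \<and>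
     (\<forall>t. \<bar>h p t - (\<Sum>j<r-p. fst (aC p) j * t ^ j)\<bar> \<le> snd (aC p) * \<bar>t\<bar> ^ (r-p)))"
    by metis
  define a where "a p j = (if p \<le> r then fst (aC p) j else 0)" for p j
  define C where "C p = snd (aC p)" for p
  have C0: "p \<le> r \<Longrightarrow> C p \<ge> 0" for p using aC by (simp add: C_def)
  have a0: "odd (p+j) \<Longrightarrow> a p j = 0" for p j using aC by (simp add: a_def)
  have hb: "p \<le> r \<Longrightarrow> \<bar>h p t - (\<Sum>j<r-p. a p j * t ^ j)\<bar> \<le> C p * \<bar>t\<bar> ^ (r-p)" for p t
    using aC by (simp add: a_def C_def)
  have hm: "h p \<in> borel_measurable borel" for p
    unfolding h_eq[abs_def] using s2 by (intro borel_measurable_continuous_onI continuous_intros) auto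
  define Cs where "Cs = (\<Sum>p\<le>r. C p)"
  define Pl where "Pl m = smult (2*pi) (\<Sum>p\<le>2*m. monom (a p (2*m-p)) (2*m-p))" for m
  define \<epsilon>' where "\<epsilon>' N = (\<epsilon> N + Cs) * real N powr (-1/2)" for N
  show ?thesis
  proof (intro exI[of _ Pl], unfold weak_local_expansion_def, intro exI[of _ \<epsilon>'] conjI allI impI)
    show "\<epsilon>' \<longlonglongrightarrow> 0"
    proof -
      have "(\<lambda>N. real N powr (-1/2)) \<longlonglongrightarrow> 0"
        by (intro tendsto_neg_powr filterlim_real_sequentially) auto
      then have "(\<lambda>N. (\<epsilon> N + Cs) * real N powr (-1/2)) \<longlonglongrightarrow> (0 + Cs) * 0"
        by (intro tendsto_mult tendsto_add eps tendsto_const)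
      then show ?thesis by (simp add: \<epsilon>'_def[abs_def])
    qed
  next
    fix N :: nat and f :: "real \<Rightarrow> real"
    assume N: "N \<ge> 1" and F: "F_class (Suc q) r f"
    define n where "n = real N"
    define c where "c = sqrt n"
    have n0: "n > 0" using N by (simp add: n_def)
    have c0: "c > 0" using n0 by (simp add: c_def)
    have cc: "c ^ 2 = n" using n0 by (simp add: c_def)
    define Cn where "Cn = C_norm (Suc q) r f"
    define E where "E = (\<integral>\<omega>. f (S_sum X N \<omega> - real N * A) \<partial>M)"
    define I where "I p = (\<integral>z. poly (Pg p) z * gauss_dens s2 z * f (z * sqrt (real N)) \<partial>lborel)" for p
    define Mj where "Mj j = (\<integral>y. y ^ j * f y \<partial>lborel)" for j
    define Bp where "Bp p = c * I p - (\<Sum>j<r-p. a p j / c ^ j * Mj j)" for p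
    define G where "G = (\<Sum>p\<le>r. real N powr (- real p / 2) * I p)"
    have gl: "\<bar>E - G\<bar> \<le> Cn * \<epsilon> N * n powr (- (real r + 1) / 2)"
      using glob[OF N F] by (simp add: E_def G_def I_def Cn_def n_def)
    have fp: "\<bar>Bp p\<bar> \<le> C p / c ^ (r-p) * Cn" if "p \<le> r" for p
    proof -
      have "\<bar>c * (\<integral>z. h p z * f (z * c) \<partial>lborel) - (\<Sum>j<r-p. a p j / c ^ j * (\<integral>y. y ^ j * f y \<partial>lborel))\<bar>
         \<le> C p / c ^ (r-p) * Cn"
        unfolding Cn_def by (rule fact1[OF c0 F _ hm hb C0]) (use that in auto)
      then show ?thesis by (simp add: Bp_def I_def h_def Mj_def c_def n_def)
    qed
    define main where "main = 1 / (2 * pi) * (\<Sum>m<(r + 1) div 2. real N powr (- real m) *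
               (\<integral>z. poly (Pl m) z * f z \<partial>lborel))"
    have main_eq: "main = (\<Sum>p\<le>r. 1 / c ^ p * (\<Sum>j<r-p. a p j / c ^ j * Mj j))"
    proof -
      have "main = (\<Sum>m<(r+1) div 2. 1 / c ^ (2*m) * (\<Sum>p\<le>2*m. a p (2*m-p) * Mj (2*m-p)))"
        unfolding main_def
      proof (subst sum_distrib_left, intro sum.cong refl)
        fix m assume "m \<in> {..<(r+1) div 2}"
        then have m: "2*m \<le> r" by auto
        have pw: "real N powr (- real m) = 1 / c ^ (2*m)"
          using n0 cc by (simp add: n_def[symmetric] powr_minus_divide powr_realpow power_mult)
        show "1 / (2 * pi) * (real N powr (- real m) * (\<integral>z. poly (Pl m) z * f z \<partial>lborel))
            = 1 / c ^ (2*m) * (\<Sum>p\<le>2*m. a p (2*m-p) * Mj (2*m-p))"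
          unfolding Pl_def int_poly_Pl[OF F m] pw by (simp add: Mj_def)
      qed
      also have "\<dots> = (\<Sum>p\<le>r. 1 / c ^ p * (\<Sum>j<r-p. a p j / c ^ j * Mj j))"
        by (rule reindex_sum[symmetric]) (rule a0)
      finally show ?thesis .
    qed
    have cG: "c * G = main + (\<Sum>p\<le>r. 1 / c ^ p * Bp p)"
    proof -
      have "c * G = (\<Sum>p\<le>r. 1 / c ^ p * (c * I p))"
      proof -
        have pwp: "\<And>p. real N powr (- real p / 2) = 1 / c ^ p"
          using powr_half_pow[OF n0] by (simp add: c_def n_def)
        show ?thesis unfolding G_def sum_distrib_left pwp by (simp add: mult_ac)
      qed
      also have "\<dots> = (\<Sum>p\<le>r. 1 / c ^ p * (\<Sum>j<r-p. a p j / c ^ j * Mj j) + 1 / c ^ p * Bp p)"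
        by (intro sum.cong refl) (simp add: Bp_def algebra_simps)
      finally show ?thesis by (simp add: main_eq sum.distrib)
    qed
    have Brem: "\<bar>\<Sum>p\<le>r. 1 / c ^ p * Bp p\<bar> \<le> Cs * Cn / c ^ r"
    proof -
      have "\<bar>\<Sum>p\<le>r. 1 / c ^ p * Bp p\<bar> \<le> (\<Sum>p\<le>r. \<bar>1 / c ^ p * Bp p\<bar>)" by (rule sum_abs)
      also have "\<dots> \<le> (\<Sum>p\<le>r. C p * Cn / c ^ r)"
      proof (rule sum_mono)
        fix p assume p: "p \<in> {..r}"
        have "\<bar>1 / c ^ p * Bp p\<bar> = 1 / c ^ p * \<bar>Bp p\<bar>" using c0 by (simp add: abs_mult)
        also have "\<dots> \<le> 1 / c ^ p * (C p / c ^ (r-p) * Cn)"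
          using fp[of p] p c0 by (intro mult_left_mono) auto
        also have "\<dots> = C p * Cn / c ^ r"
          using p c0 by (simp add: power_add[symmetric])
        finally show "\<bar>1 / c ^ p * Bp p\<bar> \<le> C p * Cn / c ^ r" .
      qed
      also have "\<dots> = Cs * Cn / c ^ r" by (simp add: Cs_def sum_divide_distrib sum_distrib_right)
      finally show ?thesis .
    qed
    have p1: "n powr (- (real r + 1) / 2) = 1 / c ^ (Suc r)"
    proof -
      have "- (real r + 1) / 2 = - real (Suc r) / 2" by simp
      then show ?thesis using powr_half_pow[OF n0, of "Suc r"] by (simp only: c_def)
    qed
    have p2: "n powr (- (real r - 1) / 2) = c * (1 / c ^ r)"
    proof -
      have "n powr (- (real r - 1) / 2) = n powr (1/2) * n powr (- real r / 2)"
        by (simp add: powr_add[symmetric] diff_divide_distrib)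
      then show ?thesis using n0 powr_half_pow[OF n0, of r] powr_half_sqrt[of n] by (simp only: c_def)
    qed
    have pe: "real N powr (-1/2) = 1 / c"
      using powr_half_pow[OF n0, of 1] by (simp add: c_def n_def)
    have gl': "\<bar>E - G\<bar> \<le> Cn * \<epsilon> N * (1 / c ^ Suc r)" using gl p1 by simp
    have e1: "c * E - main = c * (E - G) + (\<Sum>p\<le>r. 1 / c ^ p * Bp p)"
      using cG by (simp add: right_diff_distrib)
    have "\<bar>c * E - main\<bar> \<le> \<bar>c * (E - G)\<bar> + \<bar>\<Sum>p\<le>r. 1 / c ^ p * Bp p\<bar>"
      unfolding e1 by (rule abs_triangle_ineq)
    also have "\<bar>c * (E - G)\<bar> = c * \<bar>E - G\<bar>" using c0 by (simp add: abs_mult)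
    finally have "\<bar>c * E - main\<bar> \<le> c * \<bar>E - G\<bar> + Cs * Cn / c ^ r" using Brem by linarith
    also have "\<dots> \<le> c * (Cn * \<epsilon> N * (1 / c ^ Suc r)) + Cs * Cn / c ^ r"
      using gl' c0 by (intro add_right_mono mult_left_mono) auto
    also have "\<dots> = Cn * (\<epsilon> N + Cs) / c ^ r"
      using c0 by (simp add: field_simps)
    also have "\<dots> = Cn * \<epsilon>' N * real N powr (- (real r - 1) / 2)"
      unfolding \<epsilon>'_def pe p2[unfolded n_def] using c0 by (simp add: field_simps)
    finally show "\<bar>sqrt (real N) * (\<integral>\<omega>. f (S_sum X N \<omega> - real N * A) \<partial>M)
          - 1 / (2 * pi) * (\<Sum>p<(r + 1) div 2. real N powr (- real p) *
               (\<integral>z. poly (Pl p) z * f z \<partial>lborel))\<bar>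
         \<le> C_norm (Suc q) r f * \<epsilon>' N * real N powr (- (real r - 1) / 2)"
      by (simp add: c_def n_def E_def main_def Cn_def)
  qed
qed

end
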